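(* Every probabilistic database in $\mathsf{FO}(\mathsf{TI})$ has the finite moments property.
   Context: Fix a countably infinite universe $U$. A database schema is a finite nonempty set of relation symbols with arities; facts are $R(u_1,\dots,u_{\mathrm{ar}(R)})$ with $u_i\in U$; an instance is a finite set of facts ($|D|$ = number of facts); $\mathrm{adom}(D)$ is the set of elements of $U$ occurring in $D$. A probabilistic database (PDB) is a discrete probability space $(\mathbb D,P)$ with $\mathbb D$ a nonempty countable set of instances. A PDB has the finite moments property if $\sum_{D\in\mathbb D}|D|^kP(\{D\})<\infty$ for all $k\in\mathbb N_+$. A PDB $\mathcal I$ is tuple-independent if for all pairwise distinct facts $f_1,\dots,f_k$, $\Pr_{I\sim\mathcal I}(f_1\in I,\dots,f_k\in I)=\prod_i\Pr_{I\sim\mathcal I}(f_i\in I)$. An FO-view consists of one first-order formula $\Phi_R(x_1,\dots,x_{\mathrm{ar}(R)})$ per output relation symbol $R$, evaluated under active domain semantics (quantifiers range over $\mathrm{adom}(D)$ and the formula's constants), mapping $D$ to the instance containing $R(\bar a)$ for all tuples $\bar a$ over $\mathrm{adom}(D)\cup\mathrm{adom}(\Phi_R)$ with $D\models\Phi_R[\bar a]$. The image of a PDB $(\mathbb D,P)$ under a view $V$ is the PDB on $V(\mathbb D)$ with $P'(\{D'\})=P(\{D:V(D)=D'\})$. $\mathsf{FO}(\mathsf{TI})$ is the class of images of tuple-independent PDBs under FO-views. *)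

theory Defs
  imports "HOL-Probability.Probability_Mass_Function"
          "HOL-Library.Countable" "HOL-Library.Infinite_Typeclass"
begin

text \<open>The universe U is a type 'u of class countable and infinite.
  A fact R(u1,...,un) is represented as the pair (R, [u1,...,un]).\<close>

definition schema :: "'r set \<Rightarrow> bool" where
  "schema S \<longleftrightarrow> finite S \<and> S \<noteq> {}"

definition facts :: "'r set \<Rightarrow> ('r \<Rightarrow> nat) \<Rightarrow> ('r \<times> 'u list) set" where
  "facts S ar = {(R, us). R \<in> S \<and> length us = ar R}"

definition is_instance :: "'r set \<Rightarrow> ('r \<Rightarrow> nat) \<Rightarrow> ('r \<times> 'u list) set \<Rightarrow> bool" where
  "is_instance S ar D \<longleftrightarrow> finite D \<and> D \<subseteq> facts S ar"

definition adom :: "('r \<times> 'u list) set \<Rightarrow> 'u set" where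
  "adom D = (\<Union>(R, us)\<in>D. set us)"

text \<open>A PDB is a discrete probability distribution on instances (a pmf whose support
  consists of instances; the support is automatically countable).\<close>

definition is_pdb :: "'r set \<Rightarrow> ('r \<Rightarrow> nat) \<Rightarrow> ('r \<times> 'u list) set pmf \<Rightarrow> bool" where
  "is_pdb S ar P \<longleftrightarrow> (\<forall>D\<in>set_pmf P. is_instance S ar D)"

definition finite_moments :: "('r \<times> 'u list) set pmf \<Rightarrow> bool" where
  "finite_moments P \<longleftrightarrow>
     (\<forall>k::nat. k \<ge> 1 \<longrightarrow> (\<lambda>D. real (card D) ^ k * pmf P D) summable_on set_pmf P)"

definition tuple_independent :: "'r set \<Rightarrow> ('r \<Rightarrow> nat) \<Rightarrow> ('r \<times> 'u list) set pmf \<Rightarrow> bool" where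
  "tuple_independent S ar P \<longleftrightarrow>
     (\<forall>F. finite F \<and> F \<noteq> {} \<and> F \<subseteq> facts S ar \<longrightarrow>
        measure_pmf.prob P {I. F \<subseteq> I} = (\<Prod>f\<in>F. measure_pmf.prob P {I. f \<in> I}))"

datatype 'u fo_term = Var nat | Cst 'u

datatype ('r, 'u) fo =
    Atom 'r "'u fo_term list"
  | Eq "'u fo_term" "'u fo_term"
  | Neg "('r, 'u) fo"
  | Conj "('r, 'u) fo" "('r, 'u) fo"
  | Disj "('r, 'u) fo" "('r, 'u) fo"
  | Ex nat "('r, 'u) fo"
  | All nat "('r, 'u) fo"

fun term_fv :: "'u fo_term \<Rightarrow> nat set" where
  "term_fv (Var x) = {x}"
| "term_fv (Cst c) = {}"

fun term_consts :: "'u fo_term \<Rightarrow> 'u set" where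
  "term_consts (Var x) = {}"
| "term_consts (Cst c) = {c}"

fun fv :: "('r, 'u) fo \<Rightarrow> nat set" where
  "fv (Atom R ts) = (\<Union>t\<in>set ts. term_fv t)"
| "fv (Eq t1 t2) = term_fv t1 \<union> term_fv t2"
| "fv (Neg \<phi>) = fv \<phi>"
| "fv (Conj \<phi> \<psi>) = fv \<phi> \<union> fv \<psi>"
| "fv (Disj \<phi> \<psi>) = fv \<phi> \<union> fv \<psi>"
| "fv (Ex x \<phi>) = fv \<phi> - {x}"
| "fv (All x \<phi>) = fv \<phi> - {x}"

text \<open>adom of a formula: the constants occurring in it.\<close>
fun fo_consts :: "('r, 'u) fo \<Rightarrow> 'u set" where
  "fo_consts (Atom R ts) = (\<Union>t\<in>set ts. term_consts t)"
| "fo_consts (Eq t1 t2) = term_consts t1 \<union> term_consts t2"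
| "fo_consts (Neg \<phi>) = fo_consts \<phi>"
| "fo_consts (Conj \<phi> \<psi>) = fo_consts \<phi> \<union> fo_consts \<psi>"
| "fo_consts (Disj \<phi> \<psi>) = fo_consts \<phi> \<union> fo_consts \<psi>"
| "fo_consts (Ex x \<phi>) = fo_consts \<phi>"
| "fo_consts (All x \<phi>) = fo_consts \<phi>"

fun eval_term :: "(nat \<Rightarrow> 'u) \<Rightarrow> 'u fo_term \<Rightarrow> 'u" where
  "eval_term A (Var x) = A x"
| "eval_term A (Cst c) = c"

fun sat :: "'u set \<Rightarrow> ('r \<times> 'u list) set \<Rightarrow> (nat \<Rightarrow> 'u) \<Rightarrow> ('r, 'u) fo \<Rightarrow> bool" where
  "sat M D A (Atom R ts) \<longleftrightarrow> (R, map (eval_term A) ts) \<in> D"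
| "sat M D A (Eq t1 t2) \<longleftrightarrow> eval_term A t1 = eval_term A t2"
| "sat M D A (Neg \<phi>) \<longleftrightarrow> \<not> sat M D A \<phi>"
| "sat M D A (Conj \<phi> \<psi>) \<longleftrightarrow> sat M D A \<phi> \<and> sat M D A \<psi>"
| "sat M D A (Disj \<phi> \<psi>) \<longleftrightarrow> sat M D A \<phi> \<or> sat M D A \<psi>"
| "sat M D A (Ex x \<phi>) \<longleftrightarrow> (\<exists>a\<in>M. sat M D (A(x := a)) \<phi>)"
| "sat M D A (All x \<phi>) \<longleftrightarrow> (\<forall>a\<in>M. sat M D (A(x := a)) \<phi>)"

text \<open>Active domain semantics of a formula \<Phi> on D: quantifiers range over
  adom D \<union> adom \<Phi>.  The tuple a = [a_1..a_n] is assigned to variables 0..n-1.\<close>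
definition sat_adom :: "('r \<times> 'u list) set \<Rightarrow> ('r, 'u) fo \<Rightarrow> 'u list \<Rightarrow> bool" where
  "sat_adom D \<Phi> as = sat (adom D \<union> fo_consts \<Phi>) D (\<lambda>i. as ! i) \<Phi>"

definition fo_view :: "'s set \<Rightarrow> ('s \<Rightarrow> nat) \<Rightarrow> ('s \<Rightarrow> ('r, 'u) fo) \<Rightarrow> bool" where
  "fo_view S' ar' \<Phi> \<longleftrightarrow> schema S' \<and> (\<forall>R'\<in>S'. fv (\<Phi> R') \<subseteq> {..<ar' R'})"

definition apply_view ::
  "'s set \<Rightarrow> ('s \<Rightarrow> nat) \<Rightarrow> ('s \<Rightarrow> ('r, 'u) fo) \<Rightarrow> ('r \<times> 'u list) set \<Rightarrow> ('s \<times> 'u list) set" where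
  "apply_view S' ar' \<Phi> D =
     {(R', as). R' \<in> S' \<and> length as = ar' R' \<and> set as \<subseteq> adom D \<union> fo_consts (\<Phi> R')
                \<and> sat_adom D (\<Phi> R') as}"

definition image_pdb ::
  "'s set \<Rightarrow> ('s \<Rightarrow> nat) \<Rightarrow> ('s \<Rightarrow> ('r, 'u) fo) \<Rightarrow> ('r \<times> 'u list) set pmf \<Rightarrow> ('s \<times> 'u list) set pmf" where
  "image_pdb S' ar' \<Phi> P = map_pmf (apply_view S' ar' \<Phi>) P"

end

theory Submission imports Defs begin

lemma pmf_summable_iff_integrable:
  fixes g :: "'a \<Rightarrow> real"
  shows "(\<lambda>x. g x * pmf p x) summable_on set_pmf p \<longleftrightarrow> integrable (measure_pmf p) g"
proof -
  have "(\<lambda>x. g x * pmf p x) summable_on set_pmf p \<longleftrightarrow> (\<lambda>x. g x * pmf p x) summable_on UNIV"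
    by (rule summable_on_cong_neutral) (auto simp: set_pmf_eq)
  also have "\<dots> \<longleftrightarrow> Infinite_Sum.abs_summable_on (\<lambda>x. g x * pmf p x) UNIV"
    by (rule summable_on_iff_abs_summable_on_real)
  also have "\<dots> \<longleftrightarrow> integrable (count_space UNIV) (\<lambda>x. g x * pmf p x)"
    using abs_summable_equivalent[of "\<lambda>x. g x * pmf p x" UNIV] by (simp add: Infinite_Set_Sum.abs_summable_on_def)
  also have "\<dots> \<longleftrightarrow> integrable (density (count_space UNIV) (pmf p)) g"
    by (subst integrable_density) (auto simp: mult.commute)
  finally show ?thesis by (simp add: measure_pmf_eq_density)
qed

lemma pmf_bounded_integrable:
  fixes f :: "'a \<Rightarrow> real"
  assumes "\<And>x. \<bar>f x\<bar> \<le> B"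
  shows "integrable (measure_pmf P) f"
  by (rule measure_pmf.integrable_const_bound[where B=B]) (use assms in auto)

lemma card_inter_sum:
  assumes "finite F"
  shows "real (card (D \<inter> F)) = (\<Sum>f\<in>F. of_bool (f \<in> D))"
proof -
  have "card (D \<inter> F) = card {f\<in>F. f \<in> D}" by (metis Collect_conj_eq Collect_mem_eq Int_commute)
  also have "real \<dots> = (\<Sum>f\<in>{f\<in>F. f \<in> D}. 1)" by simp
  also have "\<dots> = (\<Sum>f\<in>F. of_bool (f \<in> D))"
    using assms by (simp add: sum.inter_filter[symmetric] of_bool_def) 
  finally show ?thesis .
qed

context
  fixes S :: "'r set" and ar :: "'r \<Rightarrow> nat" and P :: "('r \<times> 'u list) set pmf"
  assumes ti: "tuple_independent S ar P"
begin

definition fprob :: "'r \<times> 'u list \<Rightarrow> real" where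
  "fprob f = measure_pmf.prob P {I. f \<in> I}"

lemma fprob_nonneg: "fprob f \<ge> 0" by (simp add: fprob_def)

lemma ti_prod:
  assumes "finite A" "A \<subseteq> facts S ar"
  shows "measure_pmf.prob P {I. A \<subseteq> I} = (\<Prod>f\<in>A. fprob f)"
proof (cases "A = {}")
  case True then show ?thesis by simp
next
  case False then show ?thesis using ti assms unfolding tuple_independent_def fprob_def by blast
qed

lemma X_int:
  assumes F: "finite F"
  shows "integrable (measure_pmf P) (\<lambda>D. of_bool (B \<subseteq> D) * real (card (D \<inter> F)) ^ k)"
proof (rule pmf_bounded_integrable[where B="real (card F) ^ k"])
  fix D
  have "card (D \<inter> F) \<le> card F" using F by (simp add: card_mono)
  then show "\<bar>of_bool (B \<subseteq> D) * real (card (D \<inter> F)) ^ k\<bar> \<le> real (card F) ^ k"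
    by (auto intro: power_mono)
qed

lemma h_base:
  assumes F: "finite F" "F \<subseteq> facts S ar" and A: "A \<subseteq> F"
  shows "(\<integral>D. of_bool (A \<subseteq> D) * real (card (D \<inter> F)) ^ 0 \<partial>measure_pmf P) = (\<Prod>f\<in>A. fprob f)"
proof -
  have fin: "finite A" using A F finite_subset by blast
  have "(\<integral>D. of_bool (A \<subseteq> D) * real (card (D \<inter> F)) ^ 0 \<partial>measure_pmf P)
      = (\<integral>D. indicator {I. A \<subseteq> I} D \<partial>measure_pmf P)"
    by (intro Bochner_Integration.integral_cong) (auto simp: indicator_def)
  also have "\<dots> = measure_pmf.prob P {I. A \<subseteq> I}" by simp
  also have "\<dots> = (\<Prod>f\<in>A. fprob f)" using ti_prod[OF fin] A F by blast
  finally show ?thesis .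
qed

lemma h_step:
  assumes F: "finite F"
  shows "(\<integral>D. of_bool (A \<subseteq> D) * real (card (D \<inter> F)) ^ Suc k \<partial>measure_pmf P)
      = (\<Sum>f\<in>F. (\<integral>D. of_bool (insert f A \<subseteq> D) * real (card (D \<inter> F)) ^ k \<partial>measure_pmf P))"
proof -
  have "(\<integral>D. of_bool (A \<subseteq> D) * real (card (D \<inter> F)) ^ Suc k \<partial>measure_pmf P)
      = (\<integral>D. (\<Sum>f\<in>F. of_bool (insert f A \<subseteq> D) * real (card (D \<inter> F)) ^ k) \<partial>measure_pmf P)"
  proof (intro Bochner_Integration.integral_cong refl)
    fix D
    have "of_bool (A \<subseteq> D) * real (card (D \<inter> F)) ^ Suc k
        = (\<Sum>f\<in>F. of_bool (A \<subseteq> D) * of_bool (f \<in> D)) * real (card (D \<inter> F)) ^ k"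
      by (simp add: card_inter_sum[OF F(1)] sum_distrib_left)
    also have "\<dots> = (\<Sum>f\<in>F. of_bool (insert f A \<subseteq> D) * real (card (D \<inter> F)) ^ k)"
      by (simp add: sum_distrib_right)
    finally show "of_bool (A \<subseteq> D) * real (card (D \<inter> F)) ^ Suc k
        = (\<Sum>f\<in>F. of_bool (insert f A \<subseteq> D) * real (card (D \<inter> F)) ^ k)" .
  qed
  also have "\<dots> = (\<Sum>f\<in>F. (\<integral>D. of_bool (insert f A \<subseteq> D) * real (card (D \<inter> F)) ^ k \<partial>measure_pmf P))"
    by (rule Bochner_Integration.integral_sum) (rule X_int[OF F])
  finally show ?thesis .
qed

lemma h_bound:
  assumes F: "finite F" "F \<subseteq> facts S ar"
  shows "A \<subseteq> F \<Longrightarrow> (\<integral>D. of_bool (A \<subseteq> D) * real (card (D \<inter> F)) ^ k \<partial>measure_pmf P)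
     \<le> (\<Prod>f\<in>A. fprob f) * (real (card A) + real k + (\<Sum>f\<in>F. fprob f)) ^ k"
proof (induction k arbitrary: A)
  case 0
  then show ?case using h_base[OF F 0] by simp
next
  case (Suc k)
  define \<Lambda> where "\<Lambda> = (\<Sum>f\<in>F. fprob f)"
  define c where "c = real (card A) + real k + \<Lambda>"
  have \<Lambda>0: "\<Lambda> \<ge> 0" unfolding \<Lambda>_def by (intro sum_nonneg) (simp add: fprob_nonneg)
  have c0: "c \<ge> 0" unfolding c_def using \<Lambda>0 by simp
  have finA: "finite A" using Suc F finite_subset by blast
  have \<pi>0: "(\<Prod>f\<in>A. fprob f) \<ge> 0" by (intro prod_nonneg) (simp add: fprob_nonneg)
  have "(\<integral>D. of_bool (A \<subseteq> D) * real (card (D \<inter> F)) ^ Suc k \<partial>measure_pmf P)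
      = (\<Sum>f\<in>F. (\<integral>D. of_bool (insert f A \<subseteq> D) * real (card (D \<inter> F)) ^ k \<partial>measure_pmf P))"
    by (rule h_step[OF F(1)])
  also have "\<dots> \<le> (\<Sum>f\<in>F. (\<Prod>f\<in>A. fprob f) * (of_bool (f \<in> A) + fprob f) * (c + 1) ^ k)"
  proof (rule sum_mono)
    fix f assume f: "f \<in> F"
    show "(\<integral>D. of_bool (insert f A \<subseteq> D) * real (card (D \<inter> F)) ^ k \<partial>measure_pmf P)
        \<le> (\<Prod>f\<in>A. fprob f) * (of_bool (f \<in> A) + fprob f) * (c + 1) ^ k"
    proof (cases "f \<in> A")
      case True
      then have "(\<integral>D. of_bool (insert f A \<subseteq> D) * real (card (D \<inter> F)) ^ k \<partial>measure_pmf P)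
          \<le> (\<Prod>f\<in>A. fprob f) * c ^ k"
        using Suc.IH[of A] Suc.prems by (simp add: insert_absorb c_def \<Lambda>_def)
      also have "\<dots> \<le> (\<Prod>f\<in>A. fprob f) * (1 * (c + 1) ^ k)"
        using c0 \<pi>0 by (intro mult_left_mono) (auto intro: power_mono)
      also have "\<dots> \<le> (\<Prod>f\<in>A. fprob f) * ((1 + fprob f) * (c + 1) ^ k)"
        using c0 \<pi>0 fprob_nonneg[of f] by (intro mult_left_mono mult_right_mono) auto
      finally show ?thesis using True by (simp add: mult.assoc)
    next
      case False
      have "(\<integral>D. of_bool (insert f A \<subseteq> D) * real (card (D \<inter> F)) ^ k \<partial>measure_pmf P)
          \<le> (\<Prod>f\<in>insert f A. fprob f) * (real (card (insert f A)) + real k + \<Lambda>) ^ k"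
        using Suc.IH[of "insert f A"] Suc.prems f by (simp add: \<Lambda>_def)
      also have "\<dots> = (\<Prod>f\<in>A. fprob f) * fprob f * (c + 1) ^ k"
        using False finA by (simp add: c_def algebra_simps)
      finally show ?thesis using False by simp
    qed
  qed
  also have "\<dots> = (\<Prod>f\<in>A. fprob f) * (c + 1) ^ k * ((\<Sum>f\<in>F. of_bool (f \<in> A)) + \<Lambda>)"
    by (simp add: sum_distrib_left sum_distrib_right sum.distrib algebra_simps \<Lambda>_def)
  also have "(\<Sum>f\<in>F. of_bool (f \<in> A) :: real) = real (card A)"
    using card_inter_sum[OF F(1), of A] Suc.prems by (simp add: Int_absorb2)
  also have "(\<Prod>f\<in>A. fprob f) * (c + 1) ^ k * (real (card A) + \<Lambda>) \<le> (\<Prod>f\<in>A. fprob f) * (c + 1) ^ k * (c + 1)"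
    using \<pi>0 c0 by (intro mult_left_mono) (auto simp: c_def)
  also have "\<dots> = (\<Prod>f\<in>A. fprob f) * (real (card A) + real (Suc k) + \<Lambda>) ^ Suc k"
    by (simp add: c_def algebra_simps)
  finally show ?case by (simp add: \<Lambda>_def)
qed


lemma lambda_bound:
  assumes pdb: "is_pdb S ar P"
  shows "\<exists>B. \<forall>F :: ('r \<times> 'u list) set. finite F \<and> F \<subseteq> (facts S ar :: ('r \<times> 'u list) set) \<longrightarrow> (\<Sum>f\<in>F. fprob f) \<le> B"
proof -
  define T where "T N = {D :: ('r \<times> 'u list) set. N \<le> card D}" for N
  have "(\<lambda>N. measure_pmf.prob P (T N)) \<longlonglongrightarrow> measure_pmf.prob P (\<Inter>N. T N)"
    by (rule measure_pmf.finite_Lim_measure_decseq) (auto simp: decseq_def T_def)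
  moreover have "(\<Inter>N. T N) = {}"
    unfolding T_def using Suc_n_not_le_n by blast
  ultimately have "(\<lambda>N. measure_pmf.prob P (T N)) \<longlonglongrightarrow> 0" by simp
  then have "\<forall>\<^sub>F N in sequentially. measure_pmf.prob P (T N) < 1/2"
    by (rule order_tendstoD) simp
  then obtain N where N: "measure_pmf.prob P (T N) < 1/2"
    by (auto simp: eventually_sequentially)
  show ?thesis
  proof (intro exI allI impI)
    fix F :: "('r \<times> 'u list) set" assume F: "finite F \<and> F \<subseteq> facts S ar"
    then have Ff: "finite F" and Fs: "F \<subseteq> facts S ar" by auto
    define \<Lambda> where "\<Lambda> = (\<Sum>f\<in>F. fprob f)"
    define X where "X = (\<lambda>D :: ('r \<times> 'u list) set. real (card (D \<inter> F)))"
    show "(\<Sum>f\<in>F. fprob f) \<le> max (2 * real N) 16"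
    proof (rule ccontr)
      assume "\<not> ?thesis"
      then have big: "\<Lambda> > 2 * real N" "\<Lambda> > 16" unfolding \<Lambda>_def by auto
      have EX: "(\<integral>D. X D \<partial>measure_pmf P) = \<Lambda>"
      proof -
        have "(\<integral>D. X D \<partial>measure_pmf P) = (\<integral>D. of_bool ({} \<subseteq> D) * real (card (D \<inter> F)) ^ Suc 0 \<partial>measure_pmf P)"
          by (simp add: X_def)
        also have "\<dots> = (\<Sum>f\<in>F. (\<integral>D. of_bool ({f} \<subseteq> D) * real (card (D \<inter> F)) ^ 0 \<partial>measure_pmf P))"
          by (rule h_step[OF Ff])
        also have "\<dots> = (\<Sum>f\<in>F. fprob f)"
          by (intro sum.cong refl) (subst h_base[OF Ff Fs]; simp)
        finally show ?thesis by (simp add: \<Lambda>_def)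
      qed
      have EX2: "(\<integral>D. X D ^ 2 \<partial>measure_pmf P) \<le> \<Lambda> * (2 + \<Lambda>)"
      proof -
        have "(\<integral>D. X D ^ 2 \<partial>measure_pmf P) = (\<integral>D. of_bool ({} \<subseteq> D) * real (card (D \<inter> F)) ^ Suc 1 \<partial>measure_pmf P)"
          by (simp add: X_def numeral_2_eq_2)
        also have "\<dots> = (\<Sum>f\<in>F. (\<integral>D. of_bool ({f} \<subseteq> D) * real (card (D \<inter> F)) ^ 1 \<partial>measure_pmf P))"
          by (rule h_step[OF Ff])
        also have "\<dots> \<le> (\<Sum>f\<in>F. fprob f * (2 + \<Lambda>))"
        proof (rule sum_mono)
          fix f assume "f \<in> F"
          then show "(\<integral>D. of_bool ({f} \<subseteq> D) * real (card (D \<inter> F)) ^ 1 \<partial>measure_pmf P) \<le> fprob f * (2 + \<Lambda>)"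
            using h_bound[OF Ff Fs, of "{f}" 1] by (simp add: \<Lambda>_def)
        qed
        also have "\<dots> = \<Lambda> * (2 + \<Lambda>)" by (simp add: \<Lambda>_def sum_distrib_right)
        finally show ?thesis .
      qed
      have intX: "integrable (measure_pmf P) X"
        using X_int[OF Ff, of "{}" 1] by (simp add: X_def)
      have intX2: "integrable (measure_pmf P) (\<lambda>D. X D ^ 2)"
        using X_int[OF Ff, of "{}" 2] by (simp add: X_def)
      have var: "(\<integral>D. (X D - \<Lambda>) ^ 2 \<partial>measure_pmf P) \<le> 2 * \<Lambda>"
      proof -
        have "(\<integral>D. (X D - \<Lambda>) ^ 2 \<partial>measure_pmf P) = (\<integral>D. X D ^ 2 - 2 * \<Lambda> * X D + \<Lambda>^2 \<partial>measure_pmf P)"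
          by (simp add: power2_eq_square algebra_simps)
        also have "\<dots> = (\<integral>D. X D ^ 2 \<partial>measure_pmf P) - 2 * \<Lambda> * (\<integral>D. X D \<partial>measure_pmf P) + \<Lambda>^2"
          using intX intX2 by simp
        also have "\<dots> \<le> 2 * \<Lambda>" using EX EX2 by (simp add: power2_eq_square algebra_simps)
        finally show ?thesis .
      qed
      define L where "L = {D. X D \<le> \<Lambda> / 2}"
      have "(\<integral>D. indicator L D * (\<Lambda>/2)^2 \<partial>measure_pmf P) \<le> (\<integral>D. (X D - \<Lambda>) ^ 2 \<partial>measure_pmf P)"
      proof (rule integral_mono)
        show "integrable (measure_pmf P) (\<lambda>D. (X D - \<Lambda>) ^ 2)"
          using intX intX2 by (simp add: power2_eq_square algebra_simps)
        show "integrable (measure_pmf P) (\<lambda>D. indicator L D * (\<Lambda>/2)^2)"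
          by (rule pmf_bounded_integrable[where B="(\<Lambda>/2)^2"]) (auto simp: indicator_def)
        fix D
        show "indicator L D * (\<Lambda>/2)^2 \<le> (X D - \<Lambda>) ^ 2"
        proof (cases "D \<in> L")
          case True
          then have "\<Lambda>/2 \<le> \<Lambda> - X D" "0 \<le> \<Lambda>/2" using big by (auto simp: L_def)
          then have "(\<Lambda>/2)^2 \<le> (\<Lambda> - X D)^2" by (rule power_mono)
          then show ?thesis using True by (simp add: power2_commute)
        qed simp
      qed
      also note var
      finally have "measure_pmf.prob P L * (\<Lambda>/2)^2 \<le> 2 * \<Lambda>" by simp
      then have PL: "measure_pmf.prob P L \<le> 8 / \<Lambda>"
        using big by (simp add: field_simps power2_eq_square)
      have "measure_pmf.prob P (UNIV - L) = 1 - measure_pmf.prob P L"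
        using measure_pmf.prob_compl[of L] by simp
      moreover have "measure_pmf.prob P (UNIV - L) \<le> measure_pmf.prob P (T N)"
      proof (rule measure_pmf.finite_measure_mono_AE)
        show "AE x in measure_pmf P. x \<in> UNIV - L \<longrightarrow> x \<in> T N"
        proof (subst AE_measure_pmf_iff, intro ballI impI)
          fix D assume D: "D \<in> set_pmf P" "D \<in> UNIV - L"
          have "finite D" using pdb D unfolding is_pdb_def is_instance_def by blast
          then have "card (D \<inter> F) \<le> card D" by (simp add: card_mono)
          moreover have "real N < X D" using D big by (auto simp: L_def)
          ultimately show "D \<in> T N" by (simp add: T_def X_def)
        qed
      qed simp
      moreover have "8 / \<Lambda> < 1/2" using big by (simp add: field_simps)
      ultimately show False using N PL by linarith
    qed
  qed
qed


lemma P_moments: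
  assumes pdb: "is_pdb S ar P"
  shows "integrable (measure_pmf P) (\<lambda>D. real (card D) ^ j)"
proof -
  obtain B where B: "\<And>F :: ('r \<times> 'u list) set. finite F \<Longrightarrow> F \<subseteq> facts S ar \<Longrightarrow> (\<Sum>f\<in>F. fprob f) \<le> B"
    using lambda_bound[OF pdb] by blast
  have "(\<lambda>D. real (card D) ^ j * pmf P D) summable_on set_pmf P"
  proof (rule nonneg_bdd_above_summable_on)
    show "bdd_above (sum (\<lambda>D. real (card D) ^ j * pmf P D) ` {G. G \<subseteq> set_pmf P \<and> finite G})"
    proof (rule bdd_aboveI2)
      fix G assume G: "G \<in> {G. G \<subseteq> set_pmf P \<and> finite G}"
      define F where "F = \<Union>G"
      have finD: "\<And>D. D \<in> G \<Longrightarrow> finite D \<and> D \<subseteq> facts S ar"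
        using G pdb unfolding is_pdb_def is_instance_def by blast
      have Ff: "finite F" using G finD unfolding F_def by blast
      have Fs: "F \<subseteq> facts S ar" using finD unfolding F_def by blast
      have "(\<Sum>D\<in>G. real (card D) ^ j * pmf P D)
          = (\<integral>D. real (card (D \<inter> F)) ^ j * indicator G D \<partial>measure_pmf P)"
      proof -
        have "(\<integral>D. real (card (D \<inter> F)) ^ j * indicator G D \<partial>measure_pmf P)
            = (\<Sum>D\<in>G. pmf P D *\<^sub>R (real (card (D \<inter> F)) ^ j * indicator G D))"
          using G by (intro integral_measure_pmf) (auto simp: indicator_def split: if_splits)
        also have "\<dots> = (\<Sum>D\<in>G. real (card D) ^ j * pmf P D)"
        proof (intro sum.cong refl)
          fix D assume "D \<in> G"
          then have "D \<inter> F = D" unfolding F_def by blast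
          then show "pmf P D *\<^sub>R (real (card (D \<inter> F)) ^ j * indicator G D) = real (card D) ^ j * pmf P D"
            using \<open>D \<in> G\<close> by simp
        qed
        finally show ?thesis by simp
      qed
      also have "\<dots> \<le> (\<integral>D. of_bool ({} \<subseteq> D) * real (card (D \<inter> F)) ^ j \<partial>measure_pmf P)"
      proof (rule integral_mono)
        show "integrable (measure_pmf P) (\<lambda>D. real (card (D \<inter> F)) ^ j * indicator G D)"
          by (rule pmf_bounded_integrable[where B="real (card F) ^ j"]) (auto simp: indicator_def intro!: power_mono card_mono Ff)
        show "integrable (measure_pmf P) (\<lambda>D. of_bool ({} \<subseteq> D) * real (card (D \<inter> F)) ^ j)"
          by (rule X_int[OF Ff])
      qed (auto simp: indicator_def)
      also have "\<dots> \<le> (\<Prod>f\<in>({}::('r \<times> 'u list) set). fprob f) * (real (card ({}::('r \<times> 'u list) set)) + real j + (\<Sum>f\<in>F. fprob f)) ^ j"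
        using h_bound[OF Ff Fs, of "{}" j] by simp
      also have "\<dots> \<le> (real j + max B 0) ^ j"
        using B[OF Ff Fs] by (auto intro!: power_mono simp: sum_nonneg fprob_nonneg)
      finally show "(\<Sum>D\<in>G. real (card D) ^ j * pmf P D) \<le> (real j + max B 0) ^ j" .
    qed
  qed simp
  then show ?thesis by (simp add: pmf_summable_iff_integrable)
qed

end

lemma finite_term_consts: "finite (term_consts t)"
  by (cases t) auto

lemma finite_fo_consts: "finite (fo_consts \<phi>)"
  by (induction \<phi>) (auto simp: finite_term_consts)

lemma adom_bound:
  assumes "is_instance S ar D" "finite S"
  shows "finite (adom D) \<and> card (adom D) \<le> Max (ar ` S) * card D"
proof -
  have D: "finite D" "D \<subseteq> facts S ar" using assms unfolding is_instance_def by auto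
  have eq: "adom D = (\<Union>x\<in>D. set (snd x))" unfolding adom_def by auto
  have fin: "finite (adom D)" unfolding eq using D by auto
  have "card (adom D) \<le> (\<Sum>x\<in>D. card (set (snd x)))" unfolding eq using D by (intro card_UN_le) auto
  also have "\<dots> \<le> (\<Sum>x\<in>D. Max (ar ` S))"
  proof (rule sum_mono)
    fix x assume "x \<in> D"
    then have "fst x \<in> S" "length (snd x) = ar (fst x)" using D unfolding facts_def by auto
    then have "length (snd x) \<le> Max (ar ` S)" using assms(2) by auto
    then show "card (set (snd x)) \<le> Max (ar ` S)" using card_length le_trans by blast
  qed
  also have "\<dots> = Max (ar ` S) * card D" by simp
  finally show ?thesis using fin by simp
qed

lemma view_card_bound:
  assumes "finite S'" "finite (adom D)"
  shows "card (apply_view S' ar' \<Phi> D) \<le> (\<Sum>R'\<in>S'. card (adom D \<union> fo_consts (\<Phi> R')) ^ ar' R')"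
proof -
  let ?A = "\<lambda>R'. {as. set as \<subseteq> adom D \<union> fo_consts (\<Phi> R') \<and> length as = ar' R'}"
  let ?U = "\<Union>R'\<in>S'. (\<lambda>as. (R', as)) ` ?A R'"
  have finA: "finite (?A R')" for R'
    using assms(2) finite_fo_consts by (intro finite_lists_length_eq) auto
  have sub: "apply_view S' ar' \<Phi> D \<subseteq> ?U" unfolding apply_view_def by auto
  have finU: "finite ?U" using assms(1) finA by auto
  have "card (apply_view S' ar' \<Phi> D) \<le> card ?U" using finU sub by (rule card_mono)
  also have "\<dots> \<le> (\<Sum>R'\<in>S'. card ((\<lambda>as. (R', as)) ` ?A R'))" using assms(1) by (rule card_UN_le)
  also have "\<dots> \<le> (\<Sum>R'\<in>S'. card (?A R'))" by (intro sum_mono card_image_le finA)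
  also have "\<dots> = (\<Sum>R'\<in>S'. card (adom D \<union> fo_consts (\<Phi> R')) ^ ar' R')"
    using assms(2) finite_fo_consts by (intro sum.cong refl card_lists_length_eq) auto
  finally show ?thesis .
qed

lemma pow_suc_bound: "(d + 1) ^ n \<le> 2 ^ n * (d ^ n + (1::nat))"
proof (cases "d = 0")
  case True
  have "1 \<le> (2::nat) ^ n" by simp
  then show ?thesis using True by (simp add: algebra_simps add_increasing2)
next
  case False
  then have "(d + 1) ^ n \<le> (2 * d) ^ n" by (intro power_mono) auto
  also have "\<dots> = 2 ^ n * d ^ n" by (simp add: power_mult_distrib)
  finally show ?thesis by simp
qed

lemma view_poly_bound:
  fixes \<Phi> :: "'s \<Rightarrow> ('r, 'u) fo" and S :: "'r set"
  assumes "schema S" "schema S'"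
  obtains K n where "\<And>D. is_instance S ar D \<Longrightarrow> card (apply_view S' ar' \<Phi> D) ^ k \<le> K * (card D ^ n + 1)"
proof -
  define M where "M = Max (ar ` S)"
  define c where "c = Max ((\<lambda>R'. card (fo_consts (\<Phi> R'))) ` S')"
  define m where "m = Max (ar' ` S')"
  define L where "L = M + c + 1"
  have fS: "finite S" "finite S'" using assms unfolding schema_def by auto
  have main: "card (apply_view S' ar' \<Phi> D) \<le> card S' * (L ^ m * (card D + 1) ^ m)" if D: "is_instance S ar D" for D
  proof -
    obtain fa: "finite (adom D)" and ca: "card (adom D) \<le> M * card D"
      using adom_bound[OF D fS(1)] unfolding M_def by blast
    have "card (apply_view S' ar' \<Phi> D) \<le> (\<Sum>R'\<in>S'. card (adom D \<union> fo_consts (\<Phi> R')) ^ ar' R')"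
      by (rule view_card_bound[OF fS(2) fa])
    also have "\<dots> \<le> (\<Sum>R'\<in>S'. (L * (card D + 1)) ^ m)"
    proof (rule sum_mono)
      fix R' assume R': "R' \<in> S'"
      have "card (adom D \<union> fo_consts (\<Phi> R')) \<le> card (adom D) + card (fo_consts (\<Phi> R'))"
        by (rule card_Un_le)
      also have "\<dots> \<le> M * card D + c"
        using ca R' fS(2) unfolding c_def by (intro add_mono) auto
      also have "\<dots> \<le> L * (card D + 1)" unfolding L_def by (simp add: algebra_simps)
      finally have b1: "card (adom D \<union> fo_consts (\<Phi> R')) \<le> L * (card D + 1)" .
      have "card (adom D \<union> fo_consts (\<Phi> R')) ^ ar' R' \<le> (L * (card D + 1)) ^ ar' R'"
        using b1 by (rule power_mono) simp
      also have "\<dots> \<le> (L * (card D + 1)) ^ m"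
        using R' fS(2) unfolding m_def L_def by (intro power_increasing) auto
      finally show "card (adom D \<union> fo_consts (\<Phi> R')) ^ ar' R' \<le> (L * (card D + 1)) ^ m" .
    qed
    also have "\<dots> = card S' * (L ^ m * (card D + 1) ^ m)" by (simp only: sum_constant power_mult_distrib of_nat_id)
    finally show ?thesis .
  qed
  show ?thesis
  proof (rule that[of "(card S' * L ^ m) ^ k * 2 ^ (m * k)" "m * k"])
    fix D :: "('r \<times> 'u list) set" assume D: "is_instance S ar D"
    have "card (apply_view S' ar' \<Phi> D) ^ k \<le> (card S' * (L ^ m * (card D + 1) ^ m)) ^ k"
      using main[OF D] by (rule power_mono) simp
    also have "\<dots> = (card S' * L ^ m) ^ k * (card D + 1) ^ (m * k)"
      by (simp add: power_mult_distrib power_mult mult.assoc)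
    also have "\<dots> \<le> (card S' * L ^ m) ^ k * (2 ^ (m * k) * (card D ^ (m * k) + 1))"
      by (intro mult_left_mono pow_suc_bound) simp
    finally show "card (apply_view S' ar' \<Phi> D) ^ k \<le> (card S' * L ^ m) ^ k * 2 ^ (m * k) * (card D ^ (m * k) + 1)"
      by (simp only: mult.assoc)
  qed
qed


theorem proposition3p7:
  fixes S :: "'r set" and ar :: "'r \<Rightarrow> nat"
    and S' :: "'s set" and ar' :: "'s \<Rightarrow> nat"
    and P :: "('r \<times> 'u::{countable,infinite} list) set pmf"
    and \<Phi> :: "'s \<Rightarrow> ('r, 'u) fo"
  assumes "schema S"
    and "is_pdb S ar P"
    and "tuple_independent S ar P"
    and "fo_view S' ar' \<Phi>"
  shows "finite_moments (image_pdb S' ar' \<Phi> P)"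
  unfolding finite_moments_def
proof (intro allI impI)
  fix k :: nat assume "k \<ge> 1"
  have S': "schema S'" using assms(4) unfolding fo_view_def by blast
  obtain K n where Kn: "\<And>D. is_instance S ar D \<Longrightarrow> card (apply_view S' ar' \<Phi> D) ^ k \<le> K * (card D ^ n + 1)"
    using view_poly_bound[OF assms(1) S', where ar=ar and \<Phi>=\<Phi> and k=k and ar'=ar'] by blast
  have intn: "integrable (measure_pmf P) (\<lambda>D. real (card D) ^ n)"
    by (rule P_moments[OF assms(3) assms(2)])
  have "integrable (measure_pmf P) (\<lambda>D. real (card (apply_view S' ar' \<Phi> D)) ^ k)"
  proof (rule Bochner_Integration.integrable_bound[where f="\<lambda>D. real K * (real (card D) ^ n + 1)"])
    show "integrable (measure_pmf P) (\<lambda>D. real K * (real (card D) ^ n + 1))"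
      using intn by simp
    show "AE D in measure_pmf P. norm (real (card (apply_view S' ar' \<Phi> D)) ^ k) \<le> norm (real K * (real (card D) ^ n + 1))"
    proof (subst AE_measure_pmf_iff, intro ballI)
      fix D assume "D \<in> set_pmf P"
      then have "is_instance S ar D" using assms(2) unfolding is_pdb_def by blast
      from Kn[OF this] have "real (card (apply_view S' ar' \<Phi> D) ^ k) \<le> real (K * (card D ^ n + 1))"
        by (simp only: of_nat_le_iff)
      then show "norm (real (card (apply_view S' ar' \<Phi> D)) ^ k) \<le> norm (real K * (real (card D) ^ n + 1))"
        by (simp add: algebra_simps)
    qed
  qed simp
  then have "integrable (measure_pmf (image_pdb S' ar' \<Phi> P)) (\<lambda>E. real (card E) ^ k)"
    unfolding image_pdb_def by simp
  then show "(\<lambda>E. real (card E) ^ k * pmf (image_pdb S' ar' \<Phi> P) E) summable_on set_pmf (image_pdb S' ar' \<Phi> P)"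
    by (simp add: pmf_summable_iff_integrable)
qed

end
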